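(* Let $a\geq 3$ and $m\geq 2a^2-a+2$ be integers, and suppose $[C(m,a)]$ is colored with red and blue so that there is no monochromatic solution of $L(m,a)$ in $[C(m,a)]$, with both $a-2$ and $a-1$ red. Then $1$ is red.
   Context: For integers $m\geq 3$, $a\geq 1$, $L(m,a)$ denotes the equation $x_1+x_2+\cdots+x_{m-1}=a x_m$. For a positive integer $n$, $[n]=\{1,\dots,n\}$. A solution of $L(m,a)$ in $[n]$ is an $m$-tuple $(x_1,\dots,x_m)\in[n]^m$ (entries not necessarily distinct) satisfying the equation; given a 2-coloring of $[n]$, it is monochromatic if all $x_i$ have the same color. $C(m,a)$ denotes $\left\lceil \frac{m-1}{a}\left\lceil \frac{m-1}{a}\right\rceil\right\rceil$. *)

theory Defs
  imports Complex_Main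
begin

definition Cma :: "nat \<Rightarrow> nat \<Rightarrow> nat" where
  "Cma m a = nat \<lceil>(real (m - 1) / real a) * real_of_int \<lceil>real (m - 1) / real a\<rceil>\<rceil>"

definition is_solution :: "nat \<Rightarrow> nat \<Rightarrow> nat \<Rightarrow> (nat \<Rightarrow> nat) \<Rightarrow> bool" where
  "is_solution m a n x \<longleftrightarrow>
     (\<forall>i\<in>{1..m}. x i \<in> {1..n}) \<and> (\<Sum>i=1..m-1. x i) = a * x m"

(* a 2-colouring is a map col :: nat => bool (True = red, False = blue), only its values on [n] matter *)
definition monochromatic :: "(nat \<Rightarrow> bool) \<Rightarrow> nat \<Rightarrow> (nat \<Rightarrow> nat) \<Rightarrow> bool" where
  "monochromatic col m x \<longleftrightarrow> (\<forall>i\<in>{1..m}. \<forall>j\<in>{1..m}. col (x i) = col (x j))"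

definition no_mono_solution :: "nat \<Rightarrow> nat \<Rightarrow> nat \<Rightarrow> (nat \<Rightarrow> bool) \<Rightarrow> bool" where
  "no_mono_solution m a n col \<longleftrightarrow>
     \<not> (\<exists>x. is_solution m a n x \<and> monochromatic col m x)"

end

theory Submission
  imports Defs
begin
lemma bal_sum:
  assumes "c > 0"
  shows "(\<Sum>i=1..c. T div c + (if i \<le> T mod c then 1 else 0)) = (T::nat)"
proof -
  have "(\<Sum>i=1..c. T div c + (if i \<le> T mod c then 1 else 0)) = c * (T div c) + (\<Sum>i=1..c. (if i \<le> T mod c then 1 else 0::nat))" by (simp add: sum.distrib)
  also have "(\<Sum>i=1..c. (if i \<le> T mod c then 1 else 0::nat)) = card {i\<in>{1..c}. i \<le> T mod c}"
    by (simp add: sum.If_cases) (rule arg_cong[where f=card], auto)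
  also have "{i\<in>{1..c}. i \<le> T mod c} = {1..T mod c}" using assms
    using mod_less_divisor[OF assms, of T] by auto
  finally show ?thesis by simp
qed

lemma cma_ge:
  assumes "a \<ge> 1" "m - 1 \<ge> a*a"
  shows "m - 1 \<le> Cma m a"
proof -
  define s where "s = m - 1"
  have sa: "real s \<ge> real a * real a" using assms unfolding s_def by (metis of_nat_le_iff of_nat_mult)
  have a0: "real a > 0" using assms by simp
  have "real s / real a \<le> real_of_int \<lceil>real s / real a\<rceil>" by (rule le_of_int_ceiling)
  hence "(real s / real a) * (real s / real a) \<le> (real s / real a) * real_of_int \<lceil>real s / real a\<rceil>"
    using a0 by (intro mult_left_mono) auto
  moreover have "real s \<le> (real s / real a) * (real s / real a)"
  proof -
    have "real s / real a \<ge> real a" using sa a0 by (simp add: field_simps)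
    hence "(real s / real a) * (real s / real a) \<ge> (real s / real a) * real a" using a0
      by (intro mult_left_mono) auto
    thus ?thesis using a0 by simp
  qed
  ultimately have "real s \<le> (real s / real a) * real_of_int \<lceil>real s / real a\<rceil>" by linarith
  hence "s \<le> nat \<lceil>(real s / real a) * real_of_int \<lceil>real s / real a\<rceil>\<rceil>"
    by linarith
  thus ?thesis unfolding Cma_def s_def by simp
qed

lemma blue_lemma:
  assumes a4: "a \<ge> 4" and m: "m = s+1" and sn: "s \<le> Cma m a" and sa: "a \<le> s"
    and nm: "no_mono_solution m a (Cma m a) red"
    and r1: "red (a - 2)" and r2: "red (a - 1)"
    and v: "1 \<le> v" "v \<le> s" "s*(a-2) \<le> a*v" "a*v \<le> s*(a-1)"
  shows "\<not> red v"
proof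
  assume rv: "red v"
  define q where "q = a*v div s"
  define r where "r = a*v mod s"
  have s0: "s > 0" using sa a4 by simp
  have q1: "a-2 \<le> q"
  proof -
    have "s*(a-2) div s \<le> a*v div s" using v(3) by (rule div_le_mono)
    thus ?thesis using s0 unfolding q_def by simp
  qed
  have q2: "q \<le> a-1"
  proof -
    have "a*v div s \<le> s*(a-1) div s" using v(4) by (rule div_le_mono)
    thus ?thesis using s0 unfolding q_def by simp
  qed
  have dm: "s*q + r = a*v" unfolding q_def r_def by simp
  have q3: "r > 0 \<Longrightarrow> q < a-1"
  proof (rule ccontr)
    assume "r > 0" "\<not> q < a - 1"
    hence "q = a - 1" using q2 by simp
    thus False using dm v(4) \<open>r > 0\<close> by simp
  qed
  define x where "x = (\<lambda>i. if i = m then v else q + (if i \<le> r then 1 else 0))"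
  have xr: "red (x i)" if i1: "i \<ge> 1" for i
  proof (cases "i = m")
    case True thus ?thesis using rv unfolding x_def by simp
  next
    case False
    show ?thesis
    proof (cases "i \<le> r \<and> r > 0")
      case True
      hence "x i = a - 1" using q1 q3 False unfolding x_def by auto
      thus ?thesis using r2 by simp
    next
      case F: False
      hence "x i = q" using False i1 unfolding x_def by auto
      moreover have "q = a - 2 \<or> q = a - 1" using q1 q2 by linarith
      ultimately show ?thesis using r1 r2 by auto
    qed
  qed
  have xb: "x i \<in> {1..Cma m a}" for i
  proof (cases "i = m")
    case True thus ?thesis using v sn unfolding x_def by simp
  next
    case False
    have "x i \<le> q + 1" "x i \<ge> q" using False unfolding x_def by auto
    moreover have "q + 1 \<le> s" using q2 sa a4 by linarith
    moreover have "q \<ge> 1" using q1 a4 by linarith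
    ultimately show ?thesis using sn by auto
  qed
  have sum: "(\<Sum>i=1..m-1. x i) = a * x m"
  proof -
    have "(\<Sum>i=1..m-1. x i) = (\<Sum>i=1..s. a*v div s + (if i \<le> a*v mod s then 1 else 0))"
      using m unfolding x_def q_def r_def by (intro sum.cong) auto
    also have "\<dots> = a*v" by (rule bal_sum[OF s0])
    finally show ?thesis unfolding x_def by simp
  qed
  have "is_solution m a (Cma m a) x" unfolding is_solution_def using xb sum by auto
  moreover have "monochromatic red m x" unfolding monochromatic_def using xr by auto
  ultimately show False using nm unfolding no_mono_solution_def by auto
qed

theorem lemma5:
  fixes a m :: nat and red :: "nat \<Rightarrow> bool"
  assumes "a \<ge> 3"
    and "m \<ge> 2 * a^2 - a + 2"
    and "no_mono_solution m a (Cma m a) red"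
    and "red (a - 2)" and "red (a - 1)"
  shows "red 1"
proof (rule ccontr)
  assume nr: "\<not> red 1"
  have a4: "a \<ge> 4"
  proof (rule ccontr)
    assume "\<not> a \<ge> 4"
    hence "a = 3" using assms(1) by simp
    thus False using nr assms(4) by simp
  qed
  define s where "s = m - 1"
  define b where "b = a - 2"
  have ab: "a = b + 2" and b2: "b \<ge> 2" using a4 unfolding b_def by auto
  have a1: "a - 1 = b + 1" "a - 2 = b" using ab by auto
  have "2 * a^2 \<ge> a" using a4 by (simp add: power2_eq_square)
  hence sge: "s \<ge> 2*a*a - a + 1" using assms(2) unfolding s_def by (simp add: power2_eq_square)
  have m: "m = s + 1" using sge unfolding s_def by simp
  have sge2: "s \<ge> 2*b*b + 7*b + 7" using sge unfolding ab by (simp add: algebra_simps)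
  have saa: "a*a \<le> s" using sge2 unfolding ab by (simp add: algebra_simps)
  have sa: "a \<le> s" using sge2 unfolding ab by (simp add: algebra_simps)
  have sn: "s \<le> Cma m a" using cma_ge[of a m] saa a4 unfolding s_def by simp
  note nm = assms(3)
  have blue: "\<not> red v" if "1 \<le> v" "v \<le> s" "s*b \<le> a*v" "a*v \<le> s*(b+1)" for v
    using blue_lemma[OF a4 m sn sa nm assms(4) assms(5), of v] that a1 by simp
  define k where "k = s*(b+1) div a"
  have k1: "a*k \<le> s*(b+1)" unfolding k_def by simp
  have k2: "s*(b+1) < a*k + a"
  proof -
    have "s*(b+1) = a*k + s*(b+1) mod a" unfolding k_def by simp
    moreover have "s*(b+1) mod a < a" using a4 by simp
    ultimately show ?thesis by linarith
  qed
  have k3: "s*b \<le> a*k" using k2 sa unfolding ab by (simp add: algebra_simps)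
  have k4: "1 \<le> k" "k \<le> s"
  proof -
    have "a \<le> s*b" using sa b2 by (metis le_trans mult.right_neutral mult_le_mono2 one_le_numeral order_trans)
    hence "a*1 \<le> a*k" using k3 by linarith
    thus "1 \<le> k" using a4 by (simp del: mult_1_right)
    have "a*k \<le> a*s" using k1 unfolding ab by (simp add: algebra_simps)
    thus "k \<le> s" using a4 by simp
  qed
  have kb: "\<not> red k" using blue k1 k3 k4 by simp
  define T where "T = a*k + (b+1) - s"
  have "s \<le> s*b" using b2 by simp
  hence "s \<le> a*k" using k3 by linarith
  hence T1: "T + s = a*k + (b+1)" unfolding T_def by simp
  have T2: "s*b \<le> T" using T1 k2 unfolding ab by (simp add: algebra_simps)
  have T3: "T \<le> s*b + b + 1" using T1 k1 unfolding ab by (simp add: algebra_simps)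
  define q where "q = T div (b+1)"
  define r where "r = T mod (b+1)"
  have qr: "(b+1)*q + r = T" unfolding q_def r_def by (metis div_mult_mod_eq mult.commute)
  have rb: "r < b+1" unfolding r_def by simp
  have q1: "q \<ge> b"
  proof -
    have "(b+1)*q + b \<ge> s*b" using qr rb T2 by linarith
    hence "(b+1)*q + b \<ge> (s-1)*b + b" using sa by (simp add: algebra_simps)
    hence "(b+1)*q \<ge> (s-1)*b" by simp
    moreover have "(s-1)*b \<ge> (b+1)*b" using sa unfolding ab by (intro mult_right_mono) auto
    ultimately have "(b+1)*q \<ge> (b+1)*b" by linarith
    thus ?thesis using mult_le_cancel1[of "b+1" b q] by simp
  qed
  have yb: "\<not> red v" if "q \<le> v" "(b+1)*v \<le> T + b" for v
  proof (rule blue)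
    show "1 \<le> v" using that q1 b2 by simp
    have "(b+1)*q + b \<ge> s*b" using qr rb T2 by linarith
    hence "(b+1)*q + b \<ge> (s-1)*b + b" using sa by (simp add: algebra_simps)
    hence "(b+1)*q \<ge> (s-1)*b" by simp
    hence "a*q \<ge> s*b" using q1 sa unfolding ab by (simp add: algebra_simps)
    moreover have "a*q \<le> a*v" using that by simp
    ultimately show "s*b \<le> a*v" by linarith
    have v1: "(b+1)*v \<le> s*b + 2*b + 1" using that T3 by linarith
    have "s*b + 2*b + 1 + (b+1)*(2*b+1) \<le> (b+1)*s" using sge2 by (simp add: algebra_simps)
    hence "(b+1)*(v + 2*b+1) \<le> (b+1)*s" using v1 by (simp add: algebra_simps)
    hence v2: "v + 2*b + 1 \<le> s" by (metis mult_le_cancel1 zero_less_Suc add_Suc_right add_0_right Suc_eq_plus1 less_Suc0 mult_le_mono2 nat_mult_le_cancel_disj)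
    thus "v \<le> s" by simp
    have "a*v = (b+1)*v + v" unfolding ab by simp
    also have "\<dots> \<le> s*(b+1)" using v1 v2 by (simp add: algebra_simps)
    finally show "a*v \<le> s*(b+1)" .
  qed
  define x where "x = (\<lambda>i. if i = m then k else if i \<le> b+1 then q + (if i \<le> r then 1 else 0) else 1)"
  have xb: "\<not> red (x i)" if "i \<ge> 1" for i
  proof -
    consider "i = m" | "i \<noteq> m" "i \<le> b+1" "i \<le> r" | "i \<noteq> m" "i \<le> b+1" "\<not> i \<le> r" | "i \<noteq> m" "\<not> i \<le> b+1"
      by blast
    then show ?thesis
    proof cases
      case 1 thus ?thesis using kb unfolding x_def by simp
    next
      case 2
      hence "x i = q + 1" unfolding x_def by simp
      moreover have "(b+1)*(q+1) \<le> T + b" using qr 2 that by (simp add: algebra_simps)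
      ultimately show ?thesis using yb[of "q+1"] by simp
    next
      case 3
      hence "x i = q" unfolding x_def by simp
      moreover have "(b+1)*q \<le> T + b" using qr by linarith
      ultimately show ?thesis using yb[of q] by simp
    next
      case 4 thus ?thesis using nr unfolding x_def by simp
    qed
  qed
  have xr: "x i \<in> {1..Cma m a}" for i
  proof -
    have "(b+1)*q \<le> (b+1)*(s-1)"
    proof -
      have "(b+1)*q \<le> s*b + b + 1" using qr T3 by linarith
      also have "\<dots> \<le> (b+1)*(s-1)" using sge2 by (simp add: algebra_simps)
      finally show ?thesis .
    qed
    hence "q \<le> s - 1" using mult_le_cancel1[of "b+1" q "s-1"] by simp
    hence "q + 1 \<le> s" using sa a4 by linarith
    thus ?thesis using k4 q1 b2 sn unfolding x_def by auto
  qed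
  have sum: "(\<Sum>i=1..m-1. x i) = a * x m"
  proof -
    have sb: "s = (b+1) + (s - (b+1))" using sa unfolding ab by simp
    have "(\<Sum>i=1..m-1. x i) = (\<Sum>i=1..s. x i)" using m by simp
    also have "\<dots> = (\<Sum>i=1..b+1. x i) + (\<Sum>i=b+2..s. x i)"
      using sum.ub_add_nat[of 1 "b+1" x "s - (b+1)"] sb by simp
    also have "(\<Sum>i=1..b+1. x i) = (\<Sum>i=1..b+1. T div (b+1) + (if i \<le> T mod (b+1) then 1 else 0))"
      using m sa unfolding x_def q_def r_def ab by (intro sum.cong) auto
    also have "\<dots> = T" by (rule bal_sum) simp
    also have "(\<Sum>i=b+2..s. x i) = (\<Sum>i=b+2..s. 1)"
      using m unfolding x_def by (intro sum.cong) auto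
    also have "\<dots> = s - (b+1)" by simp
    finally show ?thesis using T1 sa unfolding x_def ab by simp
  qed
  have "is_solution m a (Cma m a) x" unfolding is_solution_def using xr sum by auto
  moreover have "monochromatic red m x" unfolding monochromatic_def using xb by auto
  ultimately show False using nm unfolding no_mono_solution_def by auto
qed

end
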